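(* Let $\Bbbk$ be a field of characteristic zero, $S=\Bbbk[x_1,x_2,x_3,x_4]$, $d\geq 2$, and $I=(x_1^d,x_2^d,x_3^d,x_4^d,x_1^{d-1}x_2,x_{3}^{d-1}x_4)$. Then $S/I$ fails the WLP in degree $2d-3$.
   Context: For a monomial ideal $I$, $A=S/I$ fails the WLP in degree $i$ if $\times(x_1+\cdots+x_4): A_i\to A_{i+1}$ is neither injective nor surjective. *)

theory Defs
  imports "HOL-Library.Poly_Mapping"
begin

text \<open>The paper's variables x_1,...,x_4 are x_0,...,x_3 here.\<close>

type_synonym 'a mpoly = "(nat \<Rightarrow>\<^sub>0 nat) \<Rightarrow>\<^sub>0 'a"

definition var :: "nat \<Rightarrow> 'a::comm_ring_1 mpoly" where
  "var j = Poly_Mapping.single (Poly_Mapping.single j 1) 1"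

definition S4 :: "'a::comm_ring_1 mpoly set" where
  "S4 = {p :: 'a mpoly. \<forall>m \<in> Poly_Mapping.keys p. \<forall>j \<in> Poly_Mapping.keys m. j < (4::nat)}"

definition mdeg :: "(nat \<Rightarrow>\<^sub>0 nat) \<Rightarrow> nat" where
  "mdeg m = (\<Sum>j\<in>Poly_Mapping.keys m. Poly_Mapping.lookup m j)"

definition S4_deg :: "nat \<Rightarrow> 'a::comm_ring_1 mpoly set" where
  "S4_deg i = {p \<in> S4. \<forall>m \<in> Poly_Mapping.keys p. mdeg m = i}"

definition ideal_gen :: "'a::comm_ring_1 mpoly set \<Rightarrow> 'a mpoly set" where
  "ideal_gen G = {(\<Sum>g\<in>G. h g * g) | h. \<forall>g\<in>G. h g \<in> S4}"

definition lin_form :: "'a::comm_ring_1 mpoly" where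
  "lin_form = var 0 + var 1 + var 2 + var 3"

text \<open>Multiplication by x_1+...+x_4 from A_i to A_{i+1}, where A = S/I and
  A_i = S_i / (I \<inter> S_i).  Injectivity / surjectivity of the induced map:\<close>
definition wlp_inj :: "'a::comm_ring_1 mpoly set \<Rightarrow> nat \<Rightarrow> bool" where
  "wlp_inj I i \<longleftrightarrow> (\<forall>f \<in> S4_deg i. lin_form * f \<in> I \<longrightarrow> f \<in> I)"

definition wlp_surj :: "'a::comm_ring_1 mpoly set \<Rightarrow> nat \<Rightarrow> bool" where
  "wlp_surj I i \<longleftrightarrow> (\<forall>g \<in> S4_deg (Suc i). \<exists>f \<in> S4_deg i. g - lin_form * f \<in> I)"

definition fails_WLP_in_degree :: "'a::comm_ring_1 mpoly set \<Rightarrow> nat \<Rightarrow> bool" where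
  "fails_WLP_in_degree I i \<longleftrightarrow> \<not> wlp_inj I i \<and> \<not> wlp_surj I i"

end

theory Submission
  imports Defs
begin

definition Phi :: "((nat \<Rightarrow>\<^sub>0 nat) \<Rightarrow> 'a::comm_ring_1) \<Rightarrow> 'a mpoly \<Rightarrow> 'a" where
  "Phi w p = (\<Sum>m\<in>Poly_Mapping.keys p. Poly_Mapping.lookup p m * w m)"

lemma Phi_add: "Phi w (p + q) = Phi w p + Phi w q"
  unfolding Phi_def by (rule setsum_keys_plus_distrib) (auto simp: algebra_simps)

lemma Phi_zero[simp]: "Phi w 0 = 0"
  by (simp add: Phi_def)

lemma Phi_uminus: "Phi w (- p) = - Phi w p"
  unfolding Phi_def by (simp add: sum_negf)

lemma Phi_diff: "Phi w (p - q) = Phi w p - Phi w q"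
  using Phi_add[of w p "-q"] Phi_uminus[of w q] by simp

lemma Phi_sum: "Phi w (sum f A) = (\<Sum>a\<in>A. Phi w (f a))"
  by (induction A rule: infinite_finite_induct) (auto simp: Phi_add)

lemma Phi_single: "Phi w (Poly_Mapping.single m c) = c * w m"
  by (simp add: Phi_def)

lemma Phi_zero_if: "(\<And>m. m \<in> Poly_Mapping.keys p \<Longrightarrow> w m = 0) \<Longrightarrow> Phi w p = 0"
  unfolding Phi_def by (rule sum.neutral) auto

lemma Phi_plus_w: "Phi w p + Phi w' p = Phi (\<lambda>m. w m + w' m) p"
  unfolding Phi_def by (simp add: sum.distrib algebra_simps)

lemma expansion:
  "(p::'a::comm_ring_1 mpoly) = (\<Sum>m\<in>Poly_Mapping.keys p. Poly_Mapping.single m (Poly_Mapping.lookup p m))"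
proof (rule poly_mapping_eqI)
  fix k
  show "Poly_Mapping.lookup p k = Poly_Mapping.lookup (\<Sum>m\<in>Poly_Mapping.keys p. Poly_Mapping.single m (Poly_Mapping.lookup p m)) k"
    by (simp add: lookup_sum lookup_single when_def in_keys_iff)
qed

lemma Phi_mult_single:
  "Phi w (Poly_Mapping.single e c * p) = c * Phi (\<lambda>m. w (e + m)) p"
proof -
  have "Poly_Mapping.single e c * p = (\<Sum>m\<in>Poly_Mapping.keys p. Poly_Mapping.single (e + m) (c * Poly_Mapping.lookup p m))"
    by (subst expansion[of p]) (simp add: sum_distrib_left mult_single)
  then have "Phi w (Poly_Mapping.single e c * p) = (\<Sum>m\<in>Poly_Mapping.keys p. c * Poly_Mapping.lookup p m * w (e + m))"
    by (simp only: Phi_sum Phi_single)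
  then show ?thesis
    by (simp add: Phi_def sum_distrib_left algebra_simps)
qed



lemma var_power: "(var j :: 'a::comm_ring_1 mpoly) ^ k = Poly_Mapping.single (Poly_Mapping.single j k) 1"
proof (induction k)
  case 0 then show ?case by simp
next
  case (Suc k)
  have "(var j :: 'a mpoly) ^ Suc k = var j * var j ^ k" by simp
  also have "\<dots> = Poly_Mapping.single (Poly_Mapping.single j 1 + Poly_Mapping.single j k) 1"
    by (simp only: Suc) (simp add: var_def mult_single)
  also have "Poly_Mapping.single j 1 + Poly_Mapping.single j k = Poly_Mapping.single j (Suc k)"
    by (simp add: single_add[symmetric])
  finally show ?case .
qed

lemma S4_add: "p \<in> S4 \<Longrightarrow> q \<in> S4 \<Longrightarrow> p + q \<in> S4"
  unfolding S4_def by (auto dest!: subsetD[OF keys_add])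

lemma S4_diff: "p \<in> S4 \<Longrightarrow> q \<in> S4 \<Longrightarrow> p - q \<in> S4"
  unfolding S4_def by (auto dest!: subsetD[OF keys_diff])

lemma S4_zero: "0 \<in> S4"
  unfolding S4_def by simp

lemma S4_single: "(\<forall>j\<in>Poly_Mapping.keys m. j < 4) \<Longrightarrow> Poly_Mapping.single m c \<in> S4"
  unfolding S4_def by simp

lemma S4_mult: "p \<in> S4 \<Longrightarrow> q \<in> S4 \<Longrightarrow> p * q \<in> S4"
  unfolding S4_def mem_Collect_eq
proof (intro ballI)
  fix m j
  assume p: "\<forall>m\<in>Poly_Mapping.keys p. \<forall>j\<in>Poly_Mapping.keys m. j < 4"
    and q: "\<forall>m\<in>Poly_Mapping.keys q. \<forall>j\<in>Poly_Mapping.keys m. j < 4"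
    and m: "m \<in> Poly_Mapping.keys (p * q)" and j: "j \<in> Poly_Mapping.keys m"
  obtain a b where "m = a + b" "a \<in> Poly_Mapping.keys p" "b \<in> Poly_Mapping.keys q"
    using keys_mult[of p q] m by blast
  then show "j < 4" using keys_add[of a b] p q j by blast
qed

definition I_of :: "'a::comm_ring_1 mpoly set \<Rightarrow> 'a mpoly set" where "I_of G = ideal_gen G"

lemma ideal_genI: "p = (\<Sum>g\<in>G. h g * g) \<Longrightarrow> \<forall>g\<in>G. h g \<in> S4 \<Longrightarrow> p \<in> ideal_gen G"
  unfolding ideal_gen_def by blast

lemma ideal_zero: "0 \<in> ideal_gen G"
  unfolding ideal_gen_def using S4_zero by (auto intro!: exI[of _ "\<lambda>_. 0"])

lemma ideal_add: "p \<in> ideal_gen G \<Longrightarrow> q \<in> ideal_gen G \<Longrightarrow> p + q \<in> ideal_gen G"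
proof -
  assume "p \<in> ideal_gen G" "q \<in> ideal_gen G"
  then obtain h1 h2 where "p = (\<Sum>g\<in>G. h1 g * g)" "\<forall>g\<in>G. h1 g \<in> S4"
    "q = (\<Sum>g\<in>G. h2 g * g)" "\<forall>g\<in>G. h2 g \<in> S4"
    unfolding ideal_gen_def by auto
  then have "p + q = (\<Sum>g\<in>G. (h1 g + h2 g) * g)" "\<forall>g\<in>G. h1 g + h2 g \<in> S4"
    by (auto simp: sum.distrib distrib_right S4_add)
  then show ?thesis by (rule ideal_genI)
qed

lemma ideal_sum: "(\<And>a. a \<in> A \<Longrightarrow> f a \<in> ideal_gen G) \<Longrightarrow> sum f A \<in> ideal_gen G"
  by (induction A rule: infinite_finite_induct) (auto simp: ideal_zero ideal_add)

lemma ideal_mult_gen: "finite G \<Longrightarrow> g \<in> G \<Longrightarrow> q \<in> S4 \<Longrightarrow> q * g \<in> ideal_gen G"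
proof -
  assume G: "finite G" "g \<in> G" "q \<in> S4"
  let ?h = "\<lambda>g'. if g' = g then q else 0"
  have "(\<Sum>g'\<in>G. ?h g' * g') = (\<Sum>g'\<in>G. if g' = g then q * g' else 0)"
    by (rule sum.cong) auto
  also have "\<dots> = q * g" using G by simp
  finally have "q * g = (\<Sum>g'\<in>G. ?h g' * g')" by simp
  moreover have "\<forall>g'\<in>G. ?h g' \<in> S4" using G S4_zero by auto
  ultimately show ?thesis by (rule ideal_genI)
qed

lemma ideal_keys:
  assumes "p \<in> ideal_gen G"
    and "\<And>g. g \<in> G \<Longrightarrow> \<exists>mg. g = Poly_Mapping.single mg 1 \<and> (\<forall>a. P (a + mg))"
    and "m \<in> Poly_Mapping.keys p"
  shows "P m"
proof -
  obtain h where h: "p = (\<Sum>g\<in>G. h g * g)" using assms(1) unfolding ideal_gen_def by auto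
  then obtain g where g: "g \<in> G" "m \<in> Poly_Mapping.keys (h g * g)"
    using keys_sum[of "\<lambda>g. h g * g" G] assms(3) by blast
  obtain mg where mg: "g = Poly_Mapping.single mg 1" "\<forall>a. P (a + mg)" using assms(2) g(1) by blast
  obtain a b where "m = a + b" "b \<in> Poly_Mapping.keys g"
    using keys_mult[of "h g" g] g(2) by blast
  then have "m = a + mg" using mg(1) by simp
  then show ?thesis using mg(2) by simp
qed

lemma ideal_from_keys:
  assumes "finite G" "p \<in> S4"
    and "\<And>m. m \<in> Poly_Mapping.keys p \<Longrightarrow> \<exists>mg. Poly_Mapping.single mg 1 \<in> G \<and> (\<forall>j. Poly_Mapping.lookup mg j \<le> Poly_Mapping.lookup m j)"
  shows "p \<in> ideal_gen G"
proof -
  have "Poly_Mapping.single m (Poly_Mapping.lookup p m) \<in> ideal_gen G" if m: "m \<in> Poly_Mapping.keys p" for m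
  proof -
    obtain mg where mg: "Poly_Mapping.single mg 1 \<in> G" "\<forall>j. Poly_Mapping.lookup mg j \<le> Poly_Mapping.lookup m j"
      using assms(3) m by blast
    have eq: "(m - mg) + mg = m"
      by (rule poly_mapping_eqI) (simp add: lookup_add lookup_minus mg(2))
    have k: "\<forall>j\<in>Poly_Mapping.keys (m - mg). j < 4"
    proof
      fix j assume "j \<in> Poly_Mapping.keys (m - mg)"
      then have "j \<in> Poly_Mapping.keys m" by (auto simp: in_keys_iff lookup_minus)
      then show "j < 4" using assms(2) m unfolding S4_def by blast
    qed
    have "Poly_Mapping.single (m - mg) (Poly_Mapping.lookup p m) * Poly_Mapping.single mg 1 \<in> ideal_gen G"
      by (rule ideal_mult_gen[OF assms(1) mg(1) S4_single[OF k]])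
    then show ?thesis by (simp add: mult_single eq)
  qed
  then have "(\<Sum>m\<in>Poly_Mapping.keys p. Poly_Mapping.single m (Poly_Mapping.lookup p m)) \<in> ideal_gen G"
    by (rule ideal_sum)
  then show ?thesis using expansion[of p] by simp
qed

definition bih :: "nat \<Rightarrow> nat \<Rightarrow> 'a::comm_ring_1 mpoly \<Rightarrow> bool" where
  "bih A B p \<longleftrightarrow> (\<forall>m\<in>Poly_Mapping.keys p. (\<forall>j\<in>Poly_Mapping.keys m. j < 4) \<and>
      Poly_Mapping.lookup m 0 + Poly_Mapping.lookup m 1 = A \<and>
      Poly_Mapping.lookup m 2 + Poly_Mapping.lookup m 3 = B)"

lemma bih_add: "bih A B p \<Longrightarrow> bih A B q \<Longrightarrow> bih A B (p + q)"
  unfolding bih_def by (auto dest!: subsetD[OF keys_add])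

lemma bih_uminus: "bih A B p \<Longrightarrow> bih A B (- p)"
  unfolding bih_def by simp

lemma bih_mult: "bih A B p \<Longrightarrow> bih A' B' q \<Longrightarrow> bih (A + A') (B + B') (p * q)"
  unfolding bih_def
proof (intro ballI)
  fix m
  assume p: "\<forall>m\<in>Poly_Mapping.keys p. (\<forall>j\<in>Poly_Mapping.keys m. j < 4) \<and>
      Poly_Mapping.lookup m 0 + Poly_Mapping.lookup m 1 = A \<and>
      Poly_Mapping.lookup m 2 + Poly_Mapping.lookup m 3 = B"
    and q: "\<forall>m\<in>Poly_Mapping.keys q. (\<forall>j\<in>Poly_Mapping.keys m. j < 4) \<and>
      Poly_Mapping.lookup m 0 + Poly_Mapping.lookup m 1 = A' \<and>
      Poly_Mapping.lookup m 2 + Poly_Mapping.lookup m 3 = B'"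
    and m: "m \<in> Poly_Mapping.keys (p * q)"
  obtain a b where ab: "m = a + b" "a \<in> Poly_Mapping.keys p" "b \<in> Poly_Mapping.keys q"
    using keys_mult[of p q] m by blast
  show "(\<forall>j\<in>Poly_Mapping.keys m. j < 4) \<and>
      Poly_Mapping.lookup m 0 + Poly_Mapping.lookup m 1 = A + A' \<and>
      Poly_Mapping.lookup m 2 + Poly_Mapping.lookup m 3 = B + B'"
    using ab p q keys_add[of a b] by (auto simp: lookup_add)
qed

lemma bih_one: "bih 0 0 1"
  unfolding bih_def by simp

lemma bih_power: "bih A B p \<Longrightarrow> bih (k * A) (k * B) (p ^ k)"
  by (induction k) (simp_all add: bih_one bih_mult)

lemma bih_var0: "bih 1 0 (var 0)"
  unfolding bih_def var_def by (simp add: lookup_single)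
lemma bih_var1: "bih 1 0 (var 1)"
  unfolding bih_def var_def by (simp add: lookup_single)
lemma bih_var2: "bih 0 1 (var 2)"
  unfolding bih_def var_def by (simp add: lookup_single)
lemma bih_var3: "bih 0 1 (var 3)"
  unfolding bih_def var_def by (simp add: lookup_single)

lemma mdeg4: "(\<forall>j\<in>Poly_Mapping.keys m. j < 4) \<Longrightarrow>
  mdeg m = Poly_Mapping.lookup m 0 + Poly_Mapping.lookup m 1 + Poly_Mapping.lookup m 2 + Poly_Mapping.lookup m 3"
proof -
  assume k: "\<forall>j\<in>Poly_Mapping.keys m. j < 4"
  have "mdeg m = (\<Sum>j\<in>{0,1,2,3::nat}. Poly_Mapping.lookup m j)"
    unfolding mdeg_def
    by (rule sum.mono_neutral_left) (use k in \<open>auto simp: in_keys_iff\<close>)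
  then show ?thesis by simp
qed

lemma bih_S4: "bih A B p \<Longrightarrow> p \<in> S4"
  unfolding bih_def S4_def by blast

lemma bih_S4_deg: "bih A B p \<Longrightarrow> p \<in> S4_deg (A + B)"
  unfolding S4_deg_def using bih_S4[of A B p] mdeg4 unfolding bih_def by fastforce

lemma S4_deg_add: "p \<in> S4_deg n \<Longrightarrow> q \<in> S4_deg n \<Longrightarrow> p + q \<in> S4_deg n"
  unfolding S4_deg_def by (auto dest!: subsetD[OF keys_add] intro: S4_add)

lemma S4_deg_sum: "(\<And>a. a \<in> A \<Longrightarrow> f a \<in> S4_deg n) \<Longrightarrow> sum f A \<in> S4_deg n"
proof (induction A rule: infinite_finite_induct)
  case (infinite A) then show ?case by (simp add: S4_deg_def S4_zero)
next
  case empty then show ?case by (simp add: S4_deg_def S4_zero)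
next
  case (insert x F) then show ?case by (simp add: S4_deg_add)
qed



definition bad :: "nat \<Rightarrow> (nat \<Rightarrow>\<^sub>0 nat) \<Rightarrow> bool" where
  "bad d m \<longleftrightarrow> Poly_Mapping.lookup m 0 \<ge> d \<or> Poly_Mapping.lookup m 1 \<ge> d \<or>
     Poly_Mapping.lookup m 2 \<ge> d \<or> Poly_Mapping.lookup m 3 \<ge> d \<or>
     (Poly_Mapping.lookup m 0 \<ge> d - 1 \<and> Poly_Mapping.lookup m 1 \<ge> 1) \<or>
     (Poly_Mapping.lookup m 2 \<ge> d - 1 \<and> Poly_Mapping.lookup m 3 \<ge> 1)"

definition GG :: "nat \<Rightarrow> 'a::comm_ring_1 mpoly set" where
  "GG d = {var 0 ^ d, var 1 ^ d, var 2 ^ d, var 3 ^ d,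
                       var 0 ^ (d - 1) * var 1, var 2 ^ (d - 1) * var 3}"

lemma var_mon2: "(var i :: 'a::comm_ring_1 mpoly) ^ k * var j =
   Poly_Mapping.single (Poly_Mapping.single i k + Poly_Mapping.single j 1) 1"
  by (simp only: var_power) (simp add: var_def mult_single)

lemma GG_gens:
  assumes "g \<in> (GG d :: 'a::comm_ring_1 mpoly set)"
  shows "\<exists>mg. g = Poly_Mapping.single mg 1 \<and> (\<forall>a. bad d (a + mg))"
  using assms unfolding GG_def var_mon2 unfolding var_power
  by (auto simp: bad_def lookup_add lookup_single when_def)

lemma GG_finite: "finite (GG d)"
  unfolding GG_def by simp

lemma ideal_bad: "p \<in> ideal_gen (GG d) \<Longrightarrow> m \<in> Poly_Mapping.keys p \<Longrightarrow> bad d m"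
  by (rule ideal_keys[where P="bad d"]) (auto dest: GG_gens)

lemma bad_gen:
  assumes "bad d m"
  shows "\<exists>mg. Poly_Mapping.single mg 1 \<in> (GG d :: 'a::comm_ring_1 mpoly set) \<and>
     (\<forall>j. Poly_Mapping.lookup mg j \<le> Poly_Mapping.lookup m j)"
proof -
  have L: "\<And>i k j. Poly_Mapping.lookup (Poly_Mapping.single i k) j = (if i = j then k else 0)"
    by (simp add: lookup_single when_def)
  consider "Poly_Mapping.lookup m 0 \<ge> d" | "Poly_Mapping.lookup m 1 \<ge> d" |
     "Poly_Mapping.lookup m 2 \<ge> d" | "Poly_Mapping.lookup m 3 \<ge> d" |
     "Poly_Mapping.lookup m 0 \<ge> d - 1 \<and> Poly_Mapping.lookup m 1 \<ge> 1" |
     "Poly_Mapping.lookup m 2 \<ge> d - 1 \<and> Poly_Mapping.lookup m 3 \<ge> 1"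
    using assms unfolding bad_def by blast
  then show ?thesis
  proof cases
    case 1 then show ?thesis
      by (intro exI[of _ "Poly_Mapping.single 0 d"]) (simp add: GG_def var_power L)
  next
    case 2 then show ?thesis
      by (intro exI[of _ "Poly_Mapping.single 1 d"]) (simp add: GG_def var_power L)
  next
    case 3 then show ?thesis
      by (intro exI[of _ "Poly_Mapping.single 2 d"]) (simp add: GG_def var_power L)
  next
    case 4 then show ?thesis
      by (intro exI[of _ "Poly_Mapping.single 3 d"]) (simp add: GG_def var_power L)
  next
    case 5 then show ?thesis
      by (intro exI[of _ "Poly_Mapping.single 0 (d - 1) + Poly_Mapping.single 1 1"])
        (simp add: GG_def var_mon2 L lookup_add del: One_nat_def)
  next
    case 6 then show ?thesis
      by (intro exI[of _ "Poly_Mapping.single 2 (d - 1) + Poly_Mapping.single 3 1"])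
        (simp add: GG_def var_mon2 L lookup_add del: One_nat_def)
  qed
qed

lemma ideal_of_bad: "p \<in> S4 \<Longrightarrow> (\<And>m. m \<in> Poly_Mapping.keys p \<Longrightarrow> bad d m) \<Longrightarrow> p \<in> ideal_gen (GG d)"
  by (rule ideal_from_keys[OF GG_finite]) (auto dest: bad_gen)

definition wt :: "nat \<Rightarrow> nat \<Rightarrow> (nat \<Rightarrow>\<^sub>0 nat) \<Rightarrow> 'a::comm_ring_1" where
  "wt A B m = (if Poly_Mapping.lookup m 0 + Poly_Mapping.lookup m 1 = A \<and>
                  Poly_Mapping.lookup m 2 + Poly_Mapping.lookup m 3 = B then 1 else 0)"

lemma wt_shift0: "(\<lambda>m. wt A B (Poly_Mapping.single 0 1 + m)) = (if A = 0 then (\<lambda>_. 0) else wt (A - 1) B)"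
  by (auto simp: fun_eq_iff wt_def lookup_add lookup_single)
lemma wt_shift1: "(\<lambda>m. wt A B (Poly_Mapping.single 1 1 + m)) = (if A = 0 then (\<lambda>_. 0) else wt (A - 1) B)"
  by (auto simp: fun_eq_iff wt_def lookup_add lookup_single)
lemma wt_shift2: "(\<lambda>m. wt A B (Poly_Mapping.single 2 1 + m)) = (if B = 0 then (\<lambda>_. 0) else wt A (B - 1))"
  by (auto simp: fun_eq_iff wt_def lookup_add lookup_single)
lemma wt_shift3: "(\<lambda>m. wt A B (Poly_Mapping.single 3 1 + m)) = (if B = 0 then (\<lambda>_. 0) else wt A (B - 1))"
  by (auto simp: fun_eq_iff wt_def lookup_add lookup_single)

lemma Phi_0w: "Phi (\<lambda>_. 0) p = 0"
  by (rule Phi_zero_if) simp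

abbreviation ll :: "'a::comm_ring_1 mpoly" where "ll \<equiv> var 0 + var 1"
abbreviation ll' :: "'a::comm_ring_1 mpoly" where "ll' \<equiv> var 2 + var 3"

lemma Phi_ll: "Phi (wt A B) (ll * r) = (if A = 0 then 0 else 2 * Phi (wt (A - 1) B) r)"
proof -
  have "Phi (wt A B) (ll * r) = Phi (wt A B) (Poly_Mapping.single (Poly_Mapping.single 0 1) 1 * r)
     + Phi (wt A B) (Poly_Mapping.single (Poly_Mapping.single 1 1) 1 * r)"
    by (simp only: var_def distrib_right Phi_add)
  also have "\<dots> = Phi (\<lambda>m. wt A B (Poly_Mapping.single 0 1 + m)) r + Phi (\<lambda>m. wt A B (Poly_Mapping.single 1 1 + m)) r"
    by (simp only: Phi_mult_single mult_1)
  also have "\<dots> = (if A = 0 then 0 else 2 * Phi (wt (A - 1) B) r)"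
    by (simp only: wt_shift0 wt_shift1) (simp add: Phi_0w)
  finally show ?thesis .
qed

lemma Phi_ll': "Phi (wt A B) ((- ll') * r) = (if B = 0 then 0 else - 2 * Phi (wt A (B - 1)) r)"
proof -
  have "Phi (wt A B) ((- ll') * r) = - (Phi (wt A B) (Poly_Mapping.single (Poly_Mapping.single 2 1) 1 * r)
     + Phi (wt A B) (Poly_Mapping.single (Poly_Mapping.single 3 1) 1 * r))"
    by (simp only: var_def distrib_right Phi_add Phi_uminus mult_minus_left)
  also have "\<dots> = - (Phi (\<lambda>m. wt A B (Poly_Mapping.single 2 1 + m)) r + Phi (\<lambda>m. wt A B (Poly_Mapping.single 3 1 + m)) r)"
    by (simp only: Phi_mult_single mult_1)
  also have "\<dots> = (if B = 0 then 0 else - 2 * Phi (wt A (B - 1)) r)"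
    by (simp only: wt_shift2 wt_shift3) (simp add: Phi_0w)
  finally show ?thesis .
qed

lemma Phi_llpow: "Phi (wt A B) (ll ^ k * q) = (if k \<le> A then 2 ^ k * Phi (wt (A - k) B) q else 0)"
proof (induction k arbitrary: A)
  case 0 then show ?case by simp
next
  case (Suc k)
  note IH = Suc.IH
  have "Phi (wt A B) (ll ^ Suc k * q) = Phi (wt A B) (ll * (ll ^ k * q))"
    by (simp add: mult.assoc)
  also have "\<dots> = (if A = 0 then 0 else 2 * Phi (wt (A - 1) B) (ll ^ k * q))"
    by (rule Phi_ll)
  also have "\<dots> = (if Suc k \<le> A then 2 ^ Suc k * Phi (wt (A - Suc k) B) q else 0)"
  proof (cases A)
    case 0 then show ?thesis by simp
  next
    case (Suc a) then show ?thesis using IH[of a] by simp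
  qed
  finally show ?case .
qed

lemma Phi_ll'pow: "Phi (wt A B) ((- ll') ^ k * q) = (if k \<le> B then (- 2) ^ k * Phi (wt A (B - k)) q else 0)"
proof (induction k arbitrary: B)
  case 0 then show ?case by simp
next
  case (Suc k)
  note IH = Suc.IH
  have "Phi (wt A B) ((- ll') ^ Suc k * q) = Phi (wt A B) ((- ll') * ((- ll') ^ k * q))"
    by (simp only: power_Suc mult.assoc)
  also have "\<dots> = (if B = 0 then 0 else - 2 * Phi (wt A (B - 1)) ((- ll') ^ k * q))"
    by (rule Phi_ll')
  also have "\<dots> = (if Suc k \<le> B then (- 2) ^ Suc k * Phi (wt A (B - Suc k)) q else 0)"
  proof (cases B)
    case 0 then show ?thesis by simp
  next
    case (Suc b) then show ?thesis using IH[of b] by simp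
  qed
  finally show ?case .
qed

lemma Phi_wt00: "Phi (wt 0 0) 1 = 1"
  by (simp add: Phi_def wt_def)



definition w2 :: "nat \<Rightarrow> (nat \<Rightarrow>\<^sub>0 nat) \<Rightarrow> 'a::comm_ring_1" where
  "w2 d m = (if Poly_Mapping.lookup m 0 + Poly_Mapping.lookup m 1 = d - 1 \<and>
                  Poly_Mapping.lookup m 2 + Poly_Mapping.lookup m 3 = d - 1
             then (- 1) ^ (Poly_Mapping.lookup m 0 + Poly_Mapping.lookup m 2) else 0)"

lemma w2_sum:
  assumes "Poly_Mapping.lookup m 0 + Poly_Mapping.lookup m 1 + Poly_Mapping.lookup m 2 + Poly_Mapping.lookup m 3 = 2 * d - 3"
    and "d \<ge> 2"
  shows "w2 d (Poly_Mapping.single 0 1 + m) + w2 d (Poly_Mapping.single 1 1 + m)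
       + w2 d (Poly_Mapping.single 2 1 + m) + w2 d (Poly_Mapping.single 3 1 + m) = (0::'a::comm_ring_1)"
proof -
  obtain a b c e where abce: "Poly_Mapping.lookup m 0 = a" "Poly_Mapping.lookup m 1 = b"
    "Poly_Mapping.lookup m 2 = c" "Poly_Mapping.lookup m 3 = e" by blast
  have s: "a + b + c + e = 2 * d - 3" using assms abce by simp
  have "w2 d (Poly_Mapping.single 0 1 + m) + w2 d (Poly_Mapping.single 1 1 + m)
       + w2 d (Poly_Mapping.single 2 1 + m) + w2 d (Poly_Mapping.single 3 1 + m) =
     (if Suc a + b = d - 1 \<and> c + e = d - 1 then (- 1) ^ (Suc a + c) else 0)
   + (if a + Suc b = d - 1 \<and> c + e = d - 1 then (- 1) ^ (a + c) else 0)
   + (if a + b = d - 1 \<and> Suc c + e = d - 1 then (- 1) ^ (a + Suc c) else 0)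
   + (if a + b = d - 1 \<and> c + Suc e = d - 1 then (- 1) ^ (a + c) else (0::'a))"
    by (simp add: w2_def lookup_add lookup_single abce)
  also have "\<dots> = 0"
    using s assms(2) by auto
  finally show ?thesis .
qed

lemma bih_ll: "bih 1 0 (ll :: 'a::comm_ring_1 mpoly)"
  using bih_add[OF bih_var0 bih_var1] .

lemma bih_mll': "bih 0 1 (- ll' :: 'a::comm_ring_1 mpoly)"
  using bih_uminus[OF bih_add[OF bih_var2 bih_var3]] .

lemma bad_of_bih_high:
  assumes "d \<ge> 2" "N = 2 * d - 2" "bih N 0 p \<or> bih 0 N p" "m \<in> Poly_Mapping.keys p"
  shows "bad d m"
  using assms unfolding bih_def bad_def by fastforce

theorem lemma4p6:
  fixes d :: nat
  assumes "d \<ge> 2"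
  shows "fails_WLP_in_degree
           (ideal_gen {var 0 ^ d, var 1 ^ d, var 2 ^ d, var 3 ^ d,
                       var 0 ^ (d - 1) * var 1, var 2 ^ (d - 1) * var 3}
              :: 'k::field_char_0 mpoly set)
           (2 * d - 3)"
proof -
  define n where "n = 2 * d - 3"
  have Sn: "Suc n = 2 * d - 2" using assms unfolding n_def by simp
  have GGeq: "{var 0 ^ d, var 1 ^ d, var 2 ^ d, var 3 ^ d,
                       var 0 ^ (d - 1) * var 1, var 2 ^ (d - 1) * var 3} = (GG d :: 'k mpoly set)"
    by (simp add: GG_def)
  have L: "(lin_form :: 'k mpoly) = ll + ll'"
    by (simp add: lin_form_def algebra_simps)
  define f :: "'k mpoly" where "f = (\<Sum>k<Suc n. ll ^ k * (- ll') ^ (n - k))"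
  have Lf: "lin_form * f = ll ^ Suc n - (- ll') ^ Suc n"
    using diff_power_eq_sum[of "ll :: 'k mpoly" n "- ll'"] unfolding f_def L by simp
  have bihk: "bih k (n - k) (ll ^ k * (- ll') ^ (n - k) :: 'k mpoly)" for k
    using bih_mult[OF bih_power[OF bih_ll, of k] bih_power[OF bih_mll', of "n - k"]] by simp
  have fdeg: "f \<in> S4_deg n"
    unfolding f_def
  proof (rule S4_deg_sum)
    fix k assume "k \<in> {..<Suc n}"
    then have "k + (n - k) = n" by simp
    then show "ll ^ k * (- ll') ^ (n - k) \<in> (S4_deg n :: 'k mpoly set)"
      using bih_S4_deg[OF bihk[of k]] by simp
  qed
  have b1: "bih (Suc n) 0 (ll ^ Suc n :: 'k mpoly)"
    using bih_power[OF bih_ll, of "Suc n"] by simp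
  have b2: "bih 0 (Suc n) ((- ll') ^ Suc n :: 'k mpoly)"
    using bih_power[OF bih_mll', of "Suc n"] by simp
  have LfI: "lin_form * f \<in> ideal_gen (GG d)"
    unfolding Lf
  proof (rule ideal_of_bad)
    show "ll ^ Suc n - (- ll') ^ Suc n \<in> (S4 :: 'k mpoly set)"
      using S4_diff[OF bih_S4[OF b1] bih_S4[OF b2]] .
    fix m assume "m \<in> Poly_Mapping.keys (ll ^ Suc n - (- ll') ^ Suc n :: 'k mpoly)"
    then have "m \<in> Poly_Mapping.keys (ll ^ Suc n :: 'k mpoly) \<or> m \<in> Poly_Mapping.keys ((- ll') ^ Suc n :: 'k mpoly)"
      by (auto dest!: subsetD[OF keys_diff])
    then show "bad d m"
      using bad_of_bih_high[OF assms Sn] b1 b2 by blast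
  qed
  have Phif: "Phi (wt (d - 1) (d - 2)) f = (2::'k) ^ (d - 1) * (- 2) ^ (d - 2)"
  proof -
    have "Phi (wt (d - 1) (d - 2)) f = (\<Sum>k<Suc n. Phi (wt (d - 1) (d - 2)) (ll ^ k * ((- ll') ^ (n - k) * 1)))"
      unfolding f_def by (simp only: Phi_sum mult_1_right)
    also have "\<dots> = (\<Sum>k<Suc n. if k = d - 1 then (2::'k) ^ (d - 1) * (- 2) ^ (d - 2) else 0)"
    proof (rule sum.cong)
      fix k assume "k \<in> {..<Suc n}"
      show "Phi (wt (d - 1) (d - 2)) (ll ^ k * ((- ll') ^ (n - k) * 1)) =
        (if k = d - 1 then (2::'k) ^ (d - 1) * (- 2) ^ (d - 2) else 0)"
      proof (cases "k = d - 1")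
        case True
        then have "n - k = d - 2" using assms unfolding n_def by simp
        then show ?thesis using True by (simp only: Phi_llpow Phi_ll'pow) (simp add: Phi_wt00)
      next
        case False
        then have "\<not> (k \<le> d - 1 \<and> n - k \<le> d - 2)" using assms unfolding n_def by auto
        then show ?thesis using False by (simp only: Phi_llpow Phi_ll'pow) auto
      qed
    qed simp
    also have "\<dots> = (2::'k) ^ (d - 1) * (- 2) ^ (d - 2)"
    proof -
      have "d - 1 \<in> {..<Suc n}" using assms unfolding n_def by simp
      then show ?thesis by simp
    qed
    finally show ?thesis .
  qed
  have fnot: "f \<notin> ideal_gen (GG d)"
  proof
    assume "f \<in> ideal_gen (GG d)"
    then have "Phi (wt (d - 1) (d - 2)) f = (0::'k)"
      by (intro Phi_zero_if) (use assms in \<open>auto dest!: ideal_bad simp: wt_def bad_def\<close>)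
    then show False unfolding Phif by simp
  qed
  have notinj: "\<not> wlp_inj (ideal_gen (GG d) :: 'k mpoly set) n"
    unfolding wlp_inj_def using fdeg LfI fnot by blast
  define g :: "'k mpoly" where "g = var 0 ^ (d - 1) * var 2 ^ (d - 1)"
  have gdeg: "g \<in> S4_deg (Suc n)"
  proof -
    have "bih (d - 1) (d - 1) g"
      unfolding g_def using bih_mult[OF bih_power[OF bih_var0, of "d - 1"] bih_power[OF bih_var2, of "d - 1"]] by simp
    moreover have "d - 1 + (d - 1) = Suc n" using Sn assms by simp
    ultimately show ?thesis using bih_S4_deg[of "d - 1" "d - 1" g] by simp
  qed
  have Phig: "Phi (w2 d) g = (1::'k)"
  proof -
    have "g = Poly_Mapping.single (Poly_Mapping.single 0 (d - 1) + Poly_Mapping.single 2 (d - 1)) 1"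
      unfolding g_def var_power by (simp add: mult_single)
    then show ?thesis
      by (simp add: Phi_single w2_def lookup_add lookup_single)
  qed
  have PhiLf: "Phi (w2 d) (lin_form * f0) = (0::'k)" if f0: "f0 \<in> S4_deg n" for f0 :: "'k mpoly"
  proof -
    have "Phi (w2 d) (lin_form * f0) =
       Phi (w2 d) (Poly_Mapping.single (Poly_Mapping.single 0 1) 1 * f0) +
       Phi (w2 d) (Poly_Mapping.single (Poly_Mapping.single 1 1) 1 * f0) +
       Phi (w2 d) (Poly_Mapping.single (Poly_Mapping.single 2 1) 1 * f0) +
       Phi (w2 d) (Poly_Mapping.single (Poly_Mapping.single 3 1) 1 * f0)"
      by (simp only: lin_form_def var_def distrib_right Phi_add)
    also have "\<dots> = Phi (\<lambda>m. w2 d (Poly_Mapping.single 0 1 + m)) f0 + Phi (\<lambda>m. w2 d (Poly_Mapping.single 1 1 + m)) f0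
       + Phi (\<lambda>m. w2 d (Poly_Mapping.single 2 1 + m)) f0 + Phi (\<lambda>m. w2 d (Poly_Mapping.single 3 1 + m)) f0"
      by (simp only: Phi_mult_single mult_1)
    also have "\<dots> = Phi (\<lambda>m. w2 d (Poly_Mapping.single 0 1 + m) + w2 d (Poly_Mapping.single 1 1 + m)
       + w2 d (Poly_Mapping.single 2 1 + m) + w2 d (Poly_Mapping.single 3 1 + m)) f0"
      by (simp only: Phi_plus_w)
    also have "\<dots> = 0"
    proof (rule Phi_zero_if)
      fix m assume m: "m \<in> Poly_Mapping.keys f0"
      then have "(\<forall>j\<in>Poly_Mapping.keys m. j < 4)" "mdeg m = n"
        using f0 unfolding S4_deg_def S4_def by auto
      then have "Poly_Mapping.lookup m 0 + Poly_Mapping.lookup m 1 + Poly_Mapping.lookup m 2 + Poly_Mapping.lookup m 3 = 2 * d - 3"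
        using mdeg4 unfolding n_def by simp
      then show "w2 d (Poly_Mapping.single 0 1 + m) + w2 d (Poly_Mapping.single 1 1 + m)
       + w2 d (Poly_Mapping.single 2 1 + m) + w2 d (Poly_Mapping.single 3 1 + m) = (0::'k)"
        using w2_sum assms by blast
    qed
    finally show ?thesis .
  qed
  have notsurj: "\<not> wlp_surj (ideal_gen (GG d) :: 'k mpoly set) n"
  proof
    assume "wlp_surj (ideal_gen (GG d) :: 'k mpoly set) n"
    then obtain f0 where f0: "f0 \<in> S4_deg n" "g - lin_form * f0 \<in> ideal_gen (GG d)"
      using gdeg unfolding wlp_surj_def by blast
    have "Phi (w2 d) (g - lin_form * f0) = (0::'k)"
      by (intro Phi_zero_if) (use assms f0(2) in \<open>auto dest!: ideal_bad simp: w2_def bad_def\<close>)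
    then show False using Phig PhiLf[OF f0(1)] by (simp add: Phi_diff)
  qed
  show ?thesis
    unfolding fails_WLP_in_degree_def GGeq n_def[symmetric] using notinj notsurj by blast
qed


end
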